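(* Let $p\in\{3,5\}$ and let $H=(a_1,\dots,a_p)^\perp$ be a hyperplane of $\mathbb{R}^p$. If $v\in\mathbb{R}^p$ has pairwise distinct coordinates not summing to $0$, then $|H\cap S_pv|\leq (p-1)!$.
   Context: $S_p$ acts on $\mathbb{R}^p$ by permuting coordinates and $S_pv$ is the orbit of $v$. $(a_1,\dots,a_p)^\perp$ denotes the hyperplane $\{x:\sum_k a_kx_k=0\}$ with $(a_1,\dots,a_p)\neq 0$. *)

theory Defs
  imports "HOL-Analysis.Analysis" "HOL-Combinatorics.Permutations"
begin

text \<open>Vectors of R^p are represented as functions nat => real vanishing outside {..<p}.\<close>

definition vecs :: "nat \<Rightarrow> (nat \<Rightarrow> real) set" where
  "vecs p = {x. \<forall>i\<ge>p. x i = 0}"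

definition orbit_Sp :: "nat \<Rightarrow> (nat \<Rightarrow> real) \<Rightarrow> (nat \<Rightarrow> real) set" where
  "orbit_Sp p v = {(\<lambda>i. v (\<sigma> i)) | \<sigma>. \<sigma> permutes {..<p}}"

definition hyperplane :: "nat \<Rightarrow> (nat \<Rightarrow> real) \<Rightarrow> (nat \<Rightarrow> real) set" where
  "hyperplane p a = {x \<in> vecs p. (\<Sum>k<p. a k * x k) = 0}"

end

theory Submission
  imports Defs
begin

lemma chain_card:
  fixes E :: "'a \<Rightarrow> 'a" and \<phi> :: "'a \<Rightarrow> nat" and f :: "'a \<Rightarrow> real"
  assumes EX: "\<And>x. x \<in> X \<Longrightarrow> 0 < \<phi> x \<Longrightarrow> E x \<in> X"
    and E\<phi>: "\<And>x. x \<in> X \<Longrightarrow> 0 < \<phi> x \<Longrightarrow> \<phi> (E x) = \<phi> x - 1"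
    and Ef: "\<And>x. x \<in> X \<Longrightarrow> 0 < \<phi> x \<Longrightarrow> f x < f (E x)"
    and Einj: "\<And>x y. x \<in> X \<Longrightarrow> y \<in> X \<Longrightarrow> 0 < \<phi> x \<Longrightarrow> 0 < \<phi> y \<Longrightarrow> E x = E y \<Longrightarrow> x = y"
    and F: "finite F" "\<And>x. x \<in> X \<Longrightarrow> \<phi> x = 0 \<Longrightarrow> x \<in> F"
  shows "card {x \<in> X. f x = \<beta>} \<le> card F"
proof -
  define g where "g x = (E ^^ (\<phi> x)) x" for x
  have path: "(E ^^ i) x \<in> X \<and> \<phi> ((E ^^ i) x) = \<phi> x - i" if "x \<in> X" "i \<le> \<phi> x" for i x
    using that
  proof (induction i)
    case 0 then show ?case by simp
  next
    case (Suc i)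
    then have h: "(E ^^ i) x \<in> X" "\<phi> ((E ^^ i) x) = \<phi> x - i" by auto
    have "0 < \<phi> ((E ^^ i) x)" using h Suc.prems by simp
    then show ?case using h EX E\<phi> by simp
  qed
  have fmono: "f x < f ((E ^^ i) x)" if "x \<in> X" "0 < i" "i \<le> \<phi> x" for i x
    using that
  proof (induction i)
    case 0 then show ?case by simp
  next
    case (Suc i)
    have h: "(E ^^ i) x \<in> X" "\<phi> ((E ^^ i) x) = \<phi> x - i" using path Suc.prems by auto
    have pos: "0 < \<phi> ((E ^^ i) x)" using h Suc.prems by simp
    have "f ((E ^^ i) x) < f ((E ^^ Suc i) x)" using Ef[OF h(1) pos] by simp
    moreover have "f x \<le> f ((E ^^ i) x)"
    proof (cases "i = 0")
      case True then show ?thesis by simp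
    next
      case False then show ?thesis using Suc by force
    qed
    ultimately show ?case by linarith
  qed
  have gF: "g x \<in> F" if "x \<in> X" for x
    using path[OF that, of "\<phi> x"] F(2) unfolding g_def by simp
  have gE: "g (E x) = g x" if "x \<in> X" "0 < \<phi> x" for x
  proof -
    have "\<phi> x = Suc (\<phi> (E x))" using E\<phi>[OF that] that(2) by simp
    then show ?thesis unfolding g_def by (simp add: funpow_Suc_right del: funpow.simps)
  qed
  have key: "(E ^^ (\<phi> x - \<phi> y)) x = y"
    if "\<phi> y = m" "x \<in> X" "y \<in> X" "\<phi> y \<le> \<phi> x" "g x = g y" for m x y
    using that
  proof (induction m arbitrary: x y)
    case 0
    then have "g y = y" unfolding g_def by simp
    then show ?case using 0 unfolding g_def by simp
  next
    case (Suc m)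
    have px: "0 < \<phi> x" and py: "0 < \<phi> y" using Suc.prems by auto
    have ih: "(E ^^ (\<phi> (E x) - \<phi> (E y))) (E x) = E y"
      apply (rule Suc.IH)
      using Suc.prems px py EX E\<phi> gE by auto
    have d: "\<phi> (E x) - \<phi> (E y) = \<phi> x - \<phi> y" using E\<phi> Suc.prems px py by simp
    have "E ((E ^^ (\<phi> x - \<phi> y)) x) = E y" using ih d by (simp add: funpow_swap1)
    moreover have "(E ^^ (\<phi> x - \<phi> y)) x \<in> X" "\<phi> ((E ^^ (\<phi> x - \<phi> y)) x) = \<phi> y"
      using path[OF Suc.prems(2), of "\<phi> x - \<phi> y"] Suc.prems by auto
    ultimately show ?case using Einj[of "(E ^^ (\<phi> x - \<phi> y)) x" y] Suc.prems py by auto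
  qed
  have inj: "inj_on g {x \<in> X. f x = \<beta>}"
  proof (rule inj_onI)
    fix x y assume x: "x \<in> {x \<in> X. f x = \<beta>}" and y: "y \<in> {x \<in> X. f x = \<beta>}" and eq: "g x = g y"
    show "x = y"
    proof (cases "\<phi> y \<le> \<phi> x")
      case True
      have k: "(E ^^ (\<phi> x - \<phi> y)) x = y" using key[of y _ x] x y eq True by auto
      show ?thesis
      proof (cases "\<phi> x - \<phi> y = 0")
        case True then show ?thesis using k by simp
      next
        case False
        then have "f x < f y" using fmono[of x "\<phi> x - \<phi> y"] k x by auto
        then show ?thesis using x y by simp
      qed
    next
      case False
      have k: "(E ^^ (\<phi> y - \<phi> x)) y = x" using key[of x _ y] x y eq False by auto
      have "f y < f x" using fmono[of y "\<phi> y - \<phi> x"] k y False by auto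
      then show ?thesis using x y by simp
    qed
  qed
  show ?thesis
    by (rule card_inj_on_le[OF inj _ F(1)]) (use gF in auto)
qed

definition ff :: "nat \<Rightarrow> (nat \<Rightarrow> real) \<Rightarrow> (nat \<Rightarrow> real) \<Rightarrow> (nat \<Rightarrow> nat) \<Rightarrow> real" where
  "ff p a v \<sigma> = (\<Sum>k<p. a k * v (\<sigma> k))"

definition UU :: "(nat \<Rightarrow> nat) \<Rightarrow> nat \<Rightarrow> nat \<Rightarrow> nat" where
  "UU \<sigma> r = Transposition.transpose r (Suc r) \<circ> \<sigma>"

lemma UU_permutes: "\<sigma> permutes {..<p} \<Longrightarrow> Suc r < p \<Longrightarrow> UU \<sigma> r permutes {..<p}"
  unfolding UU_def by (rule permutes_compose) (auto intro: permutes_swap_id)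

lemma tt_cancel: "Transposition.transpose a b \<circ> \<sigma> = Transposition.transpose a b \<circ> \<tau> \<Longrightarrow> \<sigma> = \<tau>"
proof -
  assume h: "Transposition.transpose a b \<circ> \<sigma> = Transposition.transpose a b \<circ> \<tau>"
  have "\<sigma> x = \<tau> x" for x
  proof -
    have "Transposition.transpose a b (\<sigma> x) = Transposition.transpose a b (\<tau> x)"
      using h by (metis comp_apply)
    then show ?thesis by (metis transpose_involutory)
  qed
  then show ?thesis by auto
qed

lemma UU_inj: "UU \<sigma> r = UU \<tau> r \<Longrightarrow> \<sigma> = \<tau>"
  unfolding UU_def by (rule tt_cancel)

lemma UU_apply: "UU \<sigma> r k = Transposition.transpose r (Suc r) (\<sigma> k)"
  unfolding UU_def by simp

lemma ff_UU:
  assumes s: "\<sigma> permutes {..<p}" and i: "i < p" "\<sigma> i = r" and j: "j < p" "\<sigma> j = Suc r"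
  shows "ff p a v (UU \<sigma> r) = ff p a v \<sigma> + (a i - a j) * (v (Suc r) - v r)"
proof -
  have inj: "\<sigma> x = \<sigma> y \<Longrightarrow> x = y" for x y using permutes_inj[OF s] by (simp add: inj_eq)
  have ij: "i \<noteq> j" using i j by auto
  have trm: "a k * v (UU \<sigma> r k) - a k * v (\<sigma> k) =
     (if k = i then a i * (v (Suc r) - v r) else 0) + (if k = j then a j * (v r - v (Suc r)) else 0)" for k
  proof (cases "k = i")
    case True then show ?thesis using i ij by (simp add: UU_apply algebra_simps)
  next
    case False
    show ?thesis
    proof (cases "k = j")
      case True then show ?thesis using j ij by (simp add: UU_apply algebra_simps)
    next
      case False2: False
      have "\<sigma> k \<noteq> r" using inj[of k i] i False by auto
      moreover have "\<sigma> k \<noteq> Suc r" using inj[of k j] j False2 by auto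
      ultimately show ?thesis using False False2 by (simp add: UU_apply)
    qed
  qed
  have "ff p a v (UU \<sigma> r) - ff p a v \<sigma> = (\<Sum>k<p. a k * v (UU \<sigma> r k) - a k * v (\<sigma> k))"
    unfolding ff_def by (simp add: sum_subtractf)
  also have "\<dots> = (\<Sum>k<p. (if k = i then a i * (v (Suc r) - v r) else 0)) + (\<Sum>k<p. (if k = j then a j * (v r - v (Suc r)) else 0))"
    unfolding trm by (simp add: sum.distrib)
  also have "\<dots> = a i * (v (Suc r) - v r) + a j * (v r - v (Suc r))"
    using i j by simp
  finally show ?thesis by (simp add: algebra_simps)
qed

lemma exists_pre:
  assumes "\<sigma> permutes {..<p}" "c < p" obtains j where "j < p" "\<sigma> j = c"
  using permutes_image[OF assms(1)] assms(2) by (metis imageE lessThan_iff)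

lemma card_perm_fix1:
  assumes "i0 < p"
  shows "card {\<sigma>. \<sigma> permutes {..<p} \<and> \<sigma> i0 = c} \<le> fact (p - 1)"
proof -
  let ?S = "{..<p} - {i0}"
  have ins: "insert i0 ?S = {..<p}" using assms by auto
  have "inj_on (\<lambda>\<sigma>. Transposition.transpose i0 c \<circ> \<sigma>) {\<sigma>. \<sigma> permutes {..<p} \<and> \<sigma> i0 = c}"
    by (rule inj_onI) (simp, metis tt_cancel)
  moreover have "(\<lambda>\<sigma>. Transposition.transpose i0 c \<circ> \<sigma>) ` {\<sigma>. \<sigma> permutes {..<p} \<and> \<sigma> i0 = c} \<subseteq> {\<tau>. \<tau> permutes ?S}"
  proof (rule image_subsetI)
    fix \<sigma> assume "\<sigma> \<in> {\<sigma>. \<sigma> permutes {..<p} \<and> \<sigma> i0 = c}"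
    then show "Transposition.transpose i0 c \<circ> \<sigma> \<in> {\<tau>. \<tau> permutes ?S}"
      using permutes_insert_lemma[of \<sigma> i0 ?S] ins by simp
  qed
  moreover have "finite {\<tau>. \<tau> permutes ?S}" by (rule finite_permutations) simp
  ultimately have "card {\<sigma>. \<sigma> permutes {..<p} \<and> \<sigma> i0 = c} \<le> card {\<tau>. \<tau> permutes ?S}"
    by (rule card_inj_on_le)
  also have "\<dots> = fact (p - 1)" using assms by (simp add: card_permutations)
  finally show ?thesis .
qed

lemma card_perm_fix2:
  assumes "i1 < p" "i2 < p" "i1 \<noteq> i2"
  shows "card {\<sigma>. \<sigma> permutes {..<p} \<and> \<sigma> i1 = c1 \<and> \<sigma> i2 = c2} \<le> fact (p - 2)"
proof -
  let ?S1 = "{..<p} - {i1}"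
  let ?S2 = "{..<p} - {i1} - {i2}"
  define d where "d = Transposition.transpose i1 c1 c2"
  have ins1: "insert i1 ?S1 = {..<p}" using assms by auto
  have ins2: "insert i2 ?S2 = ?S1" using assms by auto
  let ?h = "\<lambda>\<sigma>. Transposition.transpose i2 d \<circ> (Transposition.transpose i1 c1 \<circ> \<sigma>)"
  have "inj_on ?h {\<sigma>. \<sigma> permutes {..<p} \<and> \<sigma> i1 = c1 \<and> \<sigma> i2 = c2}"
    by (rule inj_onI) (simp, metis tt_cancel)
  moreover have "?h ` {\<sigma>. \<sigma> permutes {..<p} \<and> \<sigma> i1 = c1 \<and> \<sigma> i2 = c2} \<subseteq> {\<tau>. \<tau> permutes ?S2}"
  proof (rule image_subsetI)
    fix \<sigma> assume "\<sigma> \<in> {\<sigma>. \<sigma> permutes {..<p} \<and> \<sigma> i1 = c1 \<and> \<sigma> i2 = c2}"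
    then have a: "\<sigma> permutes {..<p}" "\<sigma> i1 = c1" "\<sigma> i2 = c2" by auto
    then have t: "Transposition.transpose i1 c1 \<circ> \<sigma> permutes ?S1"
      using permutes_insert_lemma[of \<sigma> i1 ?S1] ins1 by simp
    have "(Transposition.transpose i1 c1 \<circ> \<sigma>) i2 = d" using a d_def by simp
    then show "?h \<sigma> \<in> {\<tau>. \<tau> permutes ?S2}"
      using permutes_insert_lemma[of "Transposition.transpose i1 c1 \<circ> \<sigma>" i2 ?S2] ins2 t by simp
  qed
  moreover have "finite {\<tau>. \<tau> permutes ?S2}" by (rule finite_permutations) simp
  ultimately have "card {\<sigma>. \<sigma> permutes {..<p} \<and> \<sigma> i1 = c1 \<and> \<sigma> i2 = c2} \<le> card {\<tau>. \<tau> permutes ?S2}"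
    by (rule card_inj_on_le)
  also have "\<dots> = fact (p - 2)"
  proof -
    have "card ?S2 = p - 2" using assms by (simp add: card_Diff_singleton_if)
    then show ?thesis by (simp add: card_permutations)
  qed
  finally show ?thesis .
qed

lemma perm_lt: "\<sigma> permutes {..<p} \<Longrightarrow> i < p \<Longrightarrow> \<sigma> i < p"
  using permutes_in_image[of \<sigma> "{..<p}" i] by simp

lemma perm_inj: "\<sigma> permutes {..<p} \<Longrightarrow> \<sigma> x = \<sigma> y \<Longrightarrow> x = y"
  using permutes_inj[of \<sigma>] by (simp add: inj_eq)

lemma UU_self: "UU \<sigma> r i = Suc r" if "\<sigma> i = r" using that by (simp add: UU_apply)

lemma UU_other: "UU \<sigma> r i = \<sigma> i" if "\<sigma> i \<noteq> r" "\<sigma> i \<noteq> Suc r" using that by (simp add: UU_apply)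

lemma L1:
  assumes sv: "\<And>i j. i < j \<Longrightarrow> j < p \<Longrightarrow> v i < v j" and i0: "i0 < p"
    and amax: "\<And>j. j < p \<Longrightarrow> j \<noteq> i0 \<Longrightarrow> a j < a i0"
  shows "card {\<sigma> \<in> {\<sigma>. \<sigma> permutes {..<p}}. ff p a v \<sigma> = 0} \<le> fact (p - 1)"
proof -
  let ?X = "{\<sigma>. \<sigma> permutes {..<p}}"
  let ?F = "{\<sigma>. \<sigma> permutes {..<p} \<and> \<sigma> i0 = p - 1}"
  have "card {\<sigma> \<in> ?X. ff p a v \<sigma> = 0} \<le> card ?F"
  proof (rule chain_card[where E = "\<lambda>\<sigma>. UU \<sigma> (\<sigma> i0)" and \<phi> = "\<lambda>\<sigma>. p - 1 - \<sigma> i0"])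
    fix \<sigma> assume s: "\<sigma> \<in> ?X" and ph: "0 < p - 1 - \<sigma> i0"
    then have sp: "\<sigma> permutes {..<p}" and lt: "Suc (\<sigma> i0) < p" by auto
    show "UU \<sigma> (\<sigma> i0) \<in> ?X" using UU_permutes[OF sp lt] by simp
    show "p - 1 - UU \<sigma> (\<sigma> i0) i0 = p - 1 - \<sigma> i0 - 1" by (simp add: UU_self)
    obtain j where j: "j < p" "\<sigma> j = Suc (\<sigma> i0)" using exists_pre[OF sp lt] by blast
    have "j \<noteq> i0" using j by auto
    then have "0 < (a i0 - a j) * (v (Suc (\<sigma> i0)) - v (\<sigma> i0))"
      using amax[OF j(1)] sv[of "\<sigma> i0" "Suc (\<sigma> i0)"] lt by simp
    then show "ff p a v \<sigma> < ff p a v (UU \<sigma> (\<sigma> i0))"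
      using ff_UU[OF sp i0 refl j] by simp
  next
    fix \<sigma> \<tau> assume "\<sigma> \<in> ?X" "\<tau> \<in> ?X" and eq: "UU \<sigma> (\<sigma> i0) = UU \<tau> (\<tau> i0)"
    have "Suc (\<sigma> i0) = Suc (\<tau> i0)" using arg_cong[OF eq, of "\<lambda>f. f i0"] by (simp add: UU_self)
    then show "\<sigma> = \<tau>" using eq UU_inj by auto
  next
    show "finite ?F" using finite_permutations[of "{..<p}"] by (auto elim: rev_finite_subset)
  next
    fix \<sigma> assume s: "\<sigma> \<in> ?X" and "p - 1 - \<sigma> i0 = 0"
    then show "\<sigma> \<in> ?F" using perm_lt[of \<sigma> p i0] i0 by auto
  qed
  also have "\<dots> \<le> fact (p - 1)" by (rule card_perm_fix1[OF i0])
  finally show ?thesis .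
qed

definition XA :: "nat \<Rightarrow> nat \<Rightarrow> (nat \<Rightarrow> nat) set" where
  "XA x y = {\<sigma>. \<sigma> permutes {..<5} \<and> \<sigma> y < \<sigma> x \<and> \<not> (\<sigma> x = 2 \<and> \<sigma> y = 1) \<and> \<not> (\<sigma> x = 3 \<and> \<sigma> y = 1) \<and> \<not> (\<sigma> x = 3 \<and> \<sigma> y = 2)}"

definition XB :: "nat \<Rightarrow> nat \<Rightarrow> (nat \<Rightarrow> nat) set" where
  "XB x y = {\<sigma>. \<sigma> permutes {..<5} \<and> ((\<sigma> x = 2 \<and> \<sigma> y = 1) \<or> (\<sigma> x = 3 \<and> \<sigma> y = 1) \<or> (\<sigma> x = 3 \<and> \<sigma> y = 2))}"

lemma L2A:
  assumes sv: "\<And>i j. i < j \<Longrightarrow> j < 5 \<Longrightarrow> v i < v j" and xy: "x < 5" "y < 5" "x \<noteq> y"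
    and amax: "\<And>j. j < 5 \<Longrightarrow> j \<noteq> x \<Longrightarrow> j \<noteq> y \<Longrightarrow> a j < a x \<and> a j < a y"
  shows "card {\<sigma> \<in> XA x y. ff 5 a v \<sigma> = 0} \<le> 6"
proof -
  let ?F = "{\<sigma>. \<sigma> permutes {..<5} \<and> \<sigma> x = 4 \<and> \<sigma> y = 3}"
  define E where "E \<sigma> = (if \<sigma> x < 4 then UU \<sigma> (\<sigma> x) else UU \<sigma> (\<sigma> y))" for \<sigma>
  define \<phi> where "\<phi> \<sigma> = (4 - \<sigma> x) + (3 - \<sigma> y)" for \<sigma> :: "nat \<Rightarrow> nat"
  have c1: "\<sigma> y = 0 \<and> 1 \<le> \<sigma> x \<and> E \<sigma> = UU \<sigma> (\<sigma> x) \<and> E \<sigma> x = Suc (\<sigma> x) \<and> E \<sigma> y = 0"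
    if "\<sigma> \<in> XA x y" "\<sigma> x < 4" for \<sigma>
  proof -
    have "\<sigma> y = 0 \<and> 1 \<le> \<sigma> x" using that unfolding XA_def by auto
    then show ?thesis using that by (simp add: E_def UU_self UU_other)
  qed
  have c2: "\<sigma> x = 4 \<and> \<sigma> y < 3 \<and> E \<sigma> = UU \<sigma> (\<sigma> y) \<and> E \<sigma> x = 4 \<and> E \<sigma> y = Suc (\<sigma> y)"
    if "\<sigma> \<in> XA x y" "\<not> \<sigma> x < 4" "0 < \<phi> \<sigma>" for \<sigma>
  proof -
    have "\<sigma> x < 5" using that xy perm_lt unfolding XA_def by auto
    then have "\<sigma> x = 4 \<and> \<sigma> y < 3" using that unfolding \<phi>_def by auto
    then show ?thesis using that by (simp add: E_def UU_self UU_other)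
  qed
  have "card {\<sigma> \<in> XA x y. ff 5 a v \<sigma> = 0} \<le> card ?F"
  proof (rule chain_card[where E = E and \<phi> = \<phi>])
    fix \<sigma> assume s: "\<sigma> \<in> XA x y" and ph: "0 < \<phi> \<sigma>"
    then have sp: "\<sigma> permutes {..<5}" unfolding XA_def by auto
    show "E \<sigma> \<in> XA x y"
    proof (cases "\<sigma> x < 4")
      case True
      then show ?thesis using c1[OF s True] UU_permutes[OF sp, of "\<sigma> x"] unfolding XA_def by auto
    next
      case False
      then show ?thesis using c2[OF s False ph] UU_permutes[OF sp, of "\<sigma> y"] unfolding XA_def by auto
    qed
    show "\<phi> (E \<sigma>) = \<phi> \<sigma> - 1"
    proof (cases "\<sigma> x < 4")
      case True
      then show ?thesis using c1[OF s True] unfolding \<phi>_def by auto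
    next
      case False
      then show ?thesis using c2[OF s False ph] unfolding \<phi>_def by auto
    qed
    show "ff 5 a v \<sigma> < ff 5 a v (E \<sigma>)"
    proof (cases "\<sigma> x < 4")
      case True
      note c = c1[OF s True]
      have lt: "Suc (\<sigma> x) < 5" using True by simp
      obtain j where j: "j < 5" "\<sigma> j = Suc (\<sigma> x)" using exists_pre[OF sp lt] by blast
      have "j \<noteq> x" "j \<noteq> y" using j c by auto
      then have "0 < (a x - a j) * (v (Suc (\<sigma> x)) - v (\<sigma> x))"
        using amax[OF j(1)] sv[of "\<sigma> x" "Suc (\<sigma> x)"] lt by simp
      then show ?thesis using ff_UU[OF sp xy(1) refl j] c by simp
    next
      case False
      note c = c2[OF s False ph]
      have lt: "Suc (\<sigma> y) < 5" using c by simp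
      obtain j where j: "j < 5" "\<sigma> j = Suc (\<sigma> y)" using exists_pre[OF sp lt] by blast
      have "j \<noteq> x" "j \<noteq> y" using j c by auto
      then have "0 < (a y - a j) * (v (Suc (\<sigma> y)) - v (\<sigma> y))"
        using amax[OF j(1)] sv[of "\<sigma> y" "Suc (\<sigma> y)"] lt by simp
      then show ?thesis using ff_UU[OF sp xy(2) refl j] c by simp
    qed
  next
    fix \<sigma> \<tau> assume s: "\<sigma> \<in> XA x y" and t: "\<tau> \<in> XA x y" and ps: "0 < \<phi> \<sigma>" and pt: "0 < \<phi> \<tau>"
      and eq: "E \<sigma> = E \<tau>"
    have ex: "E \<sigma> x = E \<tau> x" and ey: "E \<sigma> y = E \<tau> y" using eq by auto
    show "\<sigma> = \<tau>"
    proof (cases "\<sigma> x < 4")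
      case True
      note cs = c1[OF s True]
      show ?thesis
      proof (cases "\<tau> x < 4")
        case True
        note ct = c1[OF t True]
        then show ?thesis using cs ct ex eq by (metis UU_inj Suc_inject)
      next
        case False
        note ct = c2[OF t False pt]
        then show ?thesis using cs ey by auto
      qed
    next
      case False
      note cs = c2[OF s False ps]
      show ?thesis
      proof (cases "\<tau> x < 4")
        case True
        note ct = c1[OF t True]
        then show ?thesis using cs ey by auto
      next
        case False
        note ct = c2[OF t False pt]
        then show ?thesis using cs ct ey eq by (metis UU_inj Suc_inject)
      qed
    qed
  next
    show "finite ?F" using finite_permutations[of "{..<5::nat}"] by (auto elim: rev_finite_subset)
  next
    fix \<sigma> assume s: "\<sigma> \<in> XA x y" and "\<phi> \<sigma> = 0"
    moreover have "\<sigma> x < 5" using s xy perm_lt unfolding XA_def by auto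
    ultimately show "\<sigma> \<in> ?F" unfolding XA_def \<phi>_def by auto
  qed
  also have "\<dots> \<le> fact (5 - 2)" by (rule card_perm_fix2[OF xy])
  also have "\<dots> = 6" by (simp add: fact_numeral)
  finally show ?thesis .
qed

lemma L2B:
  assumes sv: "\<And>i j. i < j \<Longrightarrow> j < 5 \<Longrightarrow> v i < v j" and xy: "x < 5" "y < 5" "x \<noteq> y"
    and amax: "\<And>j. j < 5 \<Longrightarrow> j \<noteq> x \<Longrightarrow> j \<noteq> y \<Longrightarrow> a j < a x \<and> a j < a y"
  shows "card {\<sigma> \<in> XB x y. ff 5 a v \<sigma> = 0} \<le> 6"
proof -
  let ?F = "{\<sigma>. \<sigma> permutes {..<5} \<and> \<sigma> x = 3 \<and> \<sigma> y = 2}"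
  define E where "E \<sigma> = (if \<sigma> x < 3 then UU \<sigma> (\<sigma> x) else UU \<sigma> (\<sigma> y))" for \<sigma>
  define \<phi> where "\<phi> \<sigma> = (3 - \<sigma> x) + (2 - \<sigma> y)" for \<sigma> :: "nat \<Rightarrow> nat"
  have c1: "\<sigma> x = 2 \<and> \<sigma> y = 1 \<and> E \<sigma> = UU \<sigma> (\<sigma> x) \<and> E \<sigma> x = 3 \<and> E \<sigma> y = 1"
    if "\<sigma> \<in> XB x y" "\<sigma> x < 3" for \<sigma>
  proof -
    have "\<sigma> x = 2 \<and> \<sigma> y = 1" using that unfolding XB_def by auto
    then show ?thesis using that by (simp add: E_def UU_self UU_other)
  qed
  have c2: "\<sigma> x = 3 \<and> \<sigma> y = 1 \<and> E \<sigma> = UU \<sigma> (\<sigma> y) \<and> E \<sigma> x = 3 \<and> E \<sigma> y = 2"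
    if "\<sigma> \<in> XB x y" "\<not> \<sigma> x < 3" "0 < \<phi> \<sigma>" for \<sigma>
  proof -
    have "\<sigma> x = 3 \<and> \<sigma> y = 1" using that unfolding XB_def \<phi>_def by auto
    then show ?thesis using that by (simp add: E_def UU_self UU_other)
  qed
  have "card {\<sigma> \<in> XB x y. ff 5 a v \<sigma> = 0} \<le> card ?F"
  proof (rule chain_card[where E = E and \<phi> = \<phi>])
    fix \<sigma> assume s: "\<sigma> \<in> XB x y" and ph: "0 < \<phi> \<sigma>"
    then have sp: "\<sigma> permutes {..<5}" unfolding XB_def by auto
    show "E \<sigma> \<in> XB x y"
    proof (cases "\<sigma> x < 3")
      case True
      then show ?thesis using c1[OF s True] UU_permutes[OF sp, of "\<sigma> x"] unfolding XB_def by auto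
    next
      case False
      then show ?thesis using c2[OF s False ph] UU_permutes[OF sp, of "\<sigma> y"] unfolding XB_def by auto
    qed
    show "\<phi> (E \<sigma>) = \<phi> \<sigma> - 1"
    proof (cases "\<sigma> x < 3")
      case True
      then show ?thesis using c1[OF s True] unfolding \<phi>_def by auto
    next
      case False
      then show ?thesis using c2[OF s False ph] unfolding \<phi>_def by auto
    qed
    show "ff 5 a v \<sigma> < ff 5 a v (E \<sigma>)"
    proof (cases "\<sigma> x < 3")
      case True
      note c = c1[OF s True]
      have lt: "Suc (\<sigma> x) < 5" using c by simp
      obtain j where j: "j < 5" "\<sigma> j = Suc (\<sigma> x)" using exists_pre[OF sp lt] by blast
      have "j \<noteq> x" "j \<noteq> y" using j c by auto
      then have "0 < (a x - a j) * (v (Suc (\<sigma> x)) - v (\<sigma> x))"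
        using amax[OF j(1)] sv[of "\<sigma> x" "Suc (\<sigma> x)"] lt by simp
      then show ?thesis using ff_UU[OF sp xy(1) refl j] c by simp
    next
      case False
      note c = c2[OF s False ph]
      have lt: "Suc (\<sigma> y) < 5" using c by simp
      obtain j where j: "j < 5" "\<sigma> j = Suc (\<sigma> y)" using exists_pre[OF sp lt] by blast
      have "j \<noteq> x" "j \<noteq> y" using j c by auto
      then have "0 < (a y - a j) * (v (Suc (\<sigma> y)) - v (\<sigma> y))"
        using amax[OF j(1)] sv[of "\<sigma> y" "Suc (\<sigma> y)"] lt by simp
      then show ?thesis using ff_UU[OF sp xy(2) refl j] c by simp
    qed
  next
    fix \<sigma> \<tau> assume s: "\<sigma> \<in> XB x y" and t: "\<tau> \<in> XB x y" and ps: "0 < \<phi> \<sigma>" and pt: "0 < \<phi> \<tau>"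
      and eq: "E \<sigma> = E \<tau>"
    have ex: "E \<sigma> x = E \<tau> x" and ey: "E \<sigma> y = E \<tau> y" using eq by auto
    show "\<sigma> = \<tau>"
    proof (cases "\<sigma> x < 3")
      case True
      note cs = c1[OF s True]
      show ?thesis
      proof (cases "\<tau> x < 3")
        case True
        note ct = c1[OF t True]
        then show ?thesis using cs ct ex eq by (metis UU_inj Suc_inject)
      next
        case False
        note ct = c2[OF t False pt]
        then show ?thesis using cs ey by auto
      qed
    next
      case False
      note cs = c2[OF s False ps]
      show ?thesis
      proof (cases "\<tau> x < 3")
        case True
        note ct = c1[OF t True]
        then show ?thesis using cs ey by auto
      next
        case False
        note ct = c2[OF t False pt]
        then show ?thesis using cs ct ey eq by (metis UU_inj Suc_inject)
      qed
    qed
  next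
    show "finite ?F" using finite_permutations[of "{..<5::nat}"] by (auto elim: rev_finite_subset)
  next
    fix \<sigma> assume s: "\<sigma> \<in> XB x y" and "\<phi> \<sigma> = 0"
    then show "\<sigma> \<in> ?F" unfolding XB_def \<phi>_def by auto
  qed
  also have "\<dots> \<le> fact (5 - 2)" by (rule card_perm_fix2[OF xy])
  also have "\<dots> = 6" by (simp add: fact_numeral)
  finally show ?thesis .
qed

lemma L2:
  assumes sv: "\<And>i j. i < j \<Longrightarrow> j < 5 \<Longrightarrow> v i < v j" and xy: "x < 5" "y < 5" "x \<noteq> y"
    and amax: "\<And>j. j < 5 \<Longrightarrow> j \<noteq> x \<Longrightarrow> j \<noteq> y \<Longrightarrow> a j < a x \<and> a j < a y"
  shows "card {\<sigma> \<in> {\<sigma>. \<sigma> permutes {..<5}}. ff 5 a v \<sigma> = 0} \<le> 24"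
proof -
  have amax': "\<And>j. j < 5 \<Longrightarrow> j \<noteq> y \<Longrightarrow> j \<noteq> x \<Longrightarrow> a j < a y \<and> a j < a x" using amax by blast
  have fin: "finite {\<sigma> \<in> S. ff 5 a v \<sigma> = 0}" if "S \<subseteq> {\<sigma>. \<sigma> permutes {..<5::nat}}" for S
    using finite_permutations[of "{..<5::nat}"] that by (auto elim: rev_finite_subset)
  have sub: "{\<sigma> \<in> {\<sigma>. \<sigma> permutes {..<5}}. ff 5 a v \<sigma> = 0} \<subseteq>
     ({\<sigma> \<in> XA x y. ff 5 a v \<sigma> = 0} \<union> {\<sigma> \<in> XB x y. ff 5 a v \<sigma> = 0}) \<union>
     ({\<sigma> \<in> XA y x. ff 5 a v \<sigma> = 0} \<union> {\<sigma> \<in> XB y x. ff 5 a v \<sigma> = 0})"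
  proof
    fix \<sigma> assume "\<sigma> \<in> {\<sigma> \<in> {\<sigma>. \<sigma> permutes {..<5}}. ff 5 a v \<sigma> = 0}"
    then have s: "\<sigma> permutes {..<5}" "ff 5 a v \<sigma> = 0" by auto
    have "\<sigma> x \<noteq> \<sigma> y" using perm_inj[OF s(1)] xy by auto
    then show "\<sigma> \<in> ({\<sigma> \<in> XA x y. ff 5 a v \<sigma> = 0} \<union> {\<sigma> \<in> XB x y. ff 5 a v \<sigma> = 0}) \<union>
     ({\<sigma> \<in> XA y x. ff 5 a v \<sigma> = 0} \<union> {\<sigma> \<in> XB y x. ff 5 a v \<sigma> = 0})"
      using s unfolding XA_def XB_def by auto
  qed
  have "card {\<sigma> \<in> {\<sigma>. \<sigma> permutes {..<5}}. ff 5 a v \<sigma> = 0} \<le> card (({\<sigma> \<in> XA x y. ff 5 a v \<sigma> = 0} \<union> {\<sigma> \<in> XB x y. ff 5 a v \<sigma> = 0}) \<union>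
     ({\<sigma> \<in> XA y x. ff 5 a v \<sigma> = 0} \<union> {\<sigma> \<in> XB y x. ff 5 a v \<sigma> = 0}))"
    by (rule card_mono[OF _ sub]) (intro finite_UnI fin; auto simp: XA_def XB_def)
  also have "\<dots> \<le> card ({\<sigma> \<in> XA x y. ff 5 a v \<sigma> = 0} \<union> {\<sigma> \<in> XB x y. ff 5 a v \<sigma> = 0}) + card
     ({\<sigma> \<in> XA y x. ff 5 a v \<sigma> = 0} \<union> {\<sigma> \<in> XB y x. ff 5 a v \<sigma> = 0})" by (rule card_Un_le)
  also have "\<dots> \<le> (card {\<sigma> \<in> XA x y. ff 5 a v \<sigma> = 0} + card {\<sigma> \<in> XB x y. ff 5 a v \<sigma> = 0}) +
      (card {\<sigma> \<in> XA y x. ff 5 a v \<sigma> = 0} + card {\<sigma> \<in> XB y x. ff 5 a v \<sigma> = 0})"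
    by (intro add_mono card_Un_le)
  also have "\<dots> \<le> (6 + 6) + (6 + 6)"
    by (intro add_mono L2A L2B sv xy amax amax') (use xy in auto)
  finally show ?thesis by simp
qed

lemma sort_perm:
  fixes v :: "nat \<Rightarrow> real"
  assumes inj: "inj_on v {..<p}"
  obtains \<pi> where "\<pi> permutes {..<p}" "\<And>i j. i < j \<Longrightarrow> j < p \<Longrightarrow> v (\<pi> i) < v (\<pi> j)"
proof -
  obtain xs where xs: "sorted_wrt (<) xs" "set xs = v ` {..<p}"
    using ex1_sorted_list_for_set_if_finite[of "v ` {..<p}"] by blast
  have dist: "distinct xs" using xs(1) strict_sorted_iff by blast
  have len: "length xs = p"
    using distinct_card[OF dist] xs(2) card_image[OF inj] by simp
  define \<pi> where "\<pi> k = (if k < p then the_inv_into {..<p} v (xs ! k) else k)" for k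
  have mem: "xs ! k \<in> v ` {..<p}" if "k < p" for k using nth_mem[of k xs] len xs(2) that by simp
  have vp: "v (\<pi> k) = xs ! k" if "k < p" for k
    using f_the_inv_into_f[OF inj mem[OF that]] that unfolding \<pi>_def by simp
  have pin: "\<pi> k \<in> {..<p}" if "k < p" for k
    using the_inv_into_into[OF inj mem[OF that] subset_refl] that unfolding \<pi>_def by simp
  have injp: "inj_on \<pi> {..<p}"
  proof (rule inj_onI)
    fix k l assume "k \<in> {..<p}" "l \<in> {..<p}" "\<pi> k = \<pi> l"
    then have "xs ! k = xs ! l" using vp by (metis lessThan_iff)
    then show "k = l" using nth_eq_iff_index_eq[OF dist] len \<open>k \<in> {..<p}\<close> \<open>l \<in> {..<p}\<close> by auto
  qed
  have "\<pi> ` {..<p} = {..<p}" by (rule endo_inj_surj) (use pin injp in auto)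
  then have "bij_betw \<pi> {..<p} {..<p}" using injp by (simp add: bij_betw_def)
  then have "\<pi> permutes {..<p}" by (rule bij_imp_permutes) (simp add: \<pi>_def)
  moreover have "v (\<pi> i) < v (\<pi> j)" if "i < j" "j < p" for i j
    using vp[of i] vp[of j] that sorted_wrt_nth_less[OF xs(1), of i j] len by simp
  ultimately show ?thesis using that by blast
qed

lemma ff_neg: "ff p (\<lambda>k. - a k) v \<sigma> = - ff p a v \<sigma>"
  unfolding ff_def by (simp add: sum_negf)

lemma main_sorted:
  assumes p: "p \<in> {3, 5}" and a: "a \<in> vecs p" "a \<noteq> (\<lambda>_. 0)"
    and sv: "\<And>i j. i < j \<Longrightarrow> j < p \<Longrightarrow> v i < v j"
    and sum: "(\<Sum>k<p. v k) \<noteq> 0"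
  shows "card {\<sigma> \<in> {\<sigma>. \<sigma> permutes {..<p}}. ff p a v \<sigma> = 0} \<le> fact (p - 1)"
proof -
  let ?S = "{..<p}"
  let ?Z = "\<lambda>b. {\<sigma> \<in> {\<sigma>. \<sigma> permutes {..<p}}. ff p b v \<sigma> = 0}"
  have Zneg: "?Z (\<lambda>k. - a k) = ?Z a" using ff_neg by auto
  have "0 \<in> ?S" using p by auto
  then have ne: "?S \<noteq> {}" by blast
  have fin: "finite (a ` ?S)" by simp
  define M where "M = Max (a ` ?S)"
  define m where "m = Min (a ` ?S)"
  define I where "I = {i \<in> ?S. a i = M}"
  define J where "J = {i \<in> ?S. a i = m}"
  have aM: "a i \<le> M" if "i < p" for i unfolding M_def using that fin by simp
  have am: "m \<le> a i" if "i < p" for i unfolding m_def using that fin by simp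
  have Mi: "M \<in> a ` ?S" unfolding M_def using fin ne by simp
  have mi: "m \<in> a ` ?S" unfolding m_def using fin ne by simp
  have Ine: "I \<noteq> {}" using Mi unfolding I_def by auto
  have Jne: "J \<noteq> {}" using mi unfolding J_def by auto
  have finI: "finite I" "finite J" unfolding I_def J_def by auto
  show ?thesis
  proof (cases "card I = 1")
    case True
    then obtain i0 where I0: "I = {i0}" by (rule card_1_singletonE)
    have i0: "i0 < p" "a i0 = M" using I0 unfolding I_def by auto
    have lt: "a j < a i0" if "j < p" "j \<noteq> i0" for j
    proof -
      have "j \<notin> I" using I0 that by auto
      then have "a j \<noteq> M" using that unfolding I_def by auto
      then show ?thesis using aM[OF that(1)] i0(2) by linarith
    qed
    show ?thesis by (rule L1[of p v i0 a, OF sv i0(1) lt])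
  next
    case notI1: False
    show ?thesis
    proof (cases "card J = 1")
      case True
      then obtain i0 where I0: "J = {i0}" by (rule card_1_singletonE)
      have i0: "i0 < p" "a i0 = m" using I0 unfolding J_def by auto
      have lt: "- a j < - a i0" if "j < p" "j \<noteq> i0" for j
      proof -
        have "j \<notin> J" using I0 that by auto
        then have "a j \<noteq> m" using that unfolding J_def by auto
        then show ?thesis using am[OF that(1)] i0(2) by linarith
      qed
      show ?thesis using L1[of p v i0 "\<lambda>k. - a k", OF sv i0(1) lt] Zneg by simp
    next
      case notJ1: False
      show ?thesis
      proof (cases "p = 5 \<and> card I = 2")
        case True
        then obtain x y where xy: "x \<noteq> y" "I = {x, y}" by (meson card_2_iff)
        have xy': "x < 5" "y < 5" "a x = M" "a y = M" using xy True unfolding I_def by auto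
        have am2: "a j < a x \<and> a j < a y" if "j < 5" "j \<noteq> x" "j \<noteq> y" for j
        proof -
          have "j \<notin> I" using xy that by auto
          then have "a j \<noteq> M" using that True unfolding I_def by auto
          then show ?thesis using aM[of j] that True xy' by force
        qed
        have sv5: "\<And>i j. i < j \<Longrightarrow> j < 5 \<Longrightarrow> v i < v j" using sv True by simp
        have "card (?Z a) \<le> 24" using L2[where v=v and x=x and y=y and a=a, OF sv5 xy'(1,2) xy(1) am2] True by simp
        then show ?thesis using True by (simp add: fact_numeral)
      next
        case notI2: False
        show ?thesis
        proof (cases "p = 5 \<and> card J = 2")
          case True
          then obtain x y where xy: "x \<noteq> y" "J = {x, y}" by (meson card_2_iff)
          have xy': "x < 5" "y < 5" "a x = m" "a y = m" using xy True unfolding J_def by auto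
          have am2: "- a j < - a x \<and> - a j < - a y" if "j < 5" "j \<noteq> x" "j \<noteq> y" for j
          proof -
            have "j \<notin> J" using xy that by auto
            then have "a j \<noteq> m" using that True unfolding J_def by auto
            then show ?thesis using am[of j] that True xy' by force
          qed
          have sv5: "\<And>i j. i < j \<Longrightarrow> j < 5 \<Longrightarrow> v i < v j" using sv True by simp
          have "card (?Z (\<lambda>k. - a k)) \<le> 24" using L2[where v=v and x=x and y=y and a="\<lambda>k. - a k", OF sv5 xy'(1,2) xy(1) am2] True by simp
          then show ?thesis using True Zneg by (simp add: fact_numeral)
        next
          case notJ2: False
          have "card I \<noteq> 0" "card J \<noteq> 0" using Ine Jne finI by simp_all
          then have cI: "card I \<ge> 2" "card J \<ge> 2" using notI1 notJ1 by simp_all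
          have Mm: "M = m"
          proof (rule ccontr)
            assume "M \<noteq> m"
            then have "I \<inter> J = {}" unfolding I_def J_def by auto
            moreover have "I \<union> J \<subseteq> ?S" unfolding I_def J_def by auto
            ultimately have "card (I \<union> J) \<le> card ?S" "card (I \<union> J) = card I + card J"
              using card_Un_disjoint[OF finI] card_mono[of ?S "I \<union> J"] by auto
            then have "card I + card J \<le> p" by simp
            have "p = 3 \<or> p = 5" using p by simp
            then show False
            proof
              assume "p = 3"
              then show False using cI \<open>card I + card J \<le> p\<close> by linarith
            next
              assume p5: "p = 5"
              then have "card I \<noteq> 2" "card J \<noteq> 2" using notI2 notJ2 by auto
              then show False using cI \<open>card I + card J \<le> p\<close> p5 by linarith
            qed
          qed
          have const: "a i = M" if "i < p" for i using aM[OF that] am[OF that] Mm by simp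
          have M0: "M \<noteq> 0"
          proof
            assume "M = 0"
            have "a i = 0" for i
            proof (cases "i < p")
              case True then show ?thesis using const \<open>M = 0\<close> by simp
            next
              case False then show ?thesis using a(1) unfolding vecs_def by simp
            qed
            then have "a = (\<lambda>_. 0)" by (simp add: fun_eq_iff)
            then show False using a(2) by simp
          qed
          have "ff p a v \<sigma> \<noteq> 0" if "\<sigma> permutes ?S" for \<sigma>
          proof -
            have "ff p a v \<sigma> = M * (\<Sum>k<p. v (\<sigma> k))"
              unfolding ff_def using const by (simp add: sum_distrib_left)
            also have "(\<Sum>k<p. v (\<sigma> k)) = (\<Sum>k<p. v k)"
              using sum.permute[OF that, of v] by (simp add: comp_def)
            finally show ?thesis using M0 sum by simp
          qed
          then have e: "?Z a = {}" by auto
          show ?thesis unfolding e by simp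
        qed
      qed
    qed
  qed
qed

theorem corollary4p5:
  fixes p :: nat and a v :: "nat \<Rightarrow> real"
  assumes "p \<in> {3, 5}"
    and "a \<in> vecs p" and "a \<noteq> (\<lambda>_. 0)"
    and "v \<in> vecs p"
    and "inj_on v {..<p}"
    and "(\<Sum>k<p. v k) \<noteq> 0"
  shows "card (hyperplane p a \<inter> orbit_Sp p v) \<le> fact (p - 1)"
proof -
  let ?Z = "\<lambda>w. {\<sigma> \<in> {\<sigma>. \<sigma> permutes {..<p}}. ff p a w \<sigma> = 0}"
  have finP: "finite {\<sigma>. \<sigma> permutes {..<p}}" by (rule finite_permutations) simp
  have "hyperplane p a \<inter> orbit_Sp p v \<subseteq> (\<lambda>\<sigma> i. v (\<sigma> i)) ` ?Z v"
    unfolding hyperplane_def orbit_Sp_def ff_def by auto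
  then have "card (hyperplane p a \<inter> orbit_Sp p v) \<le> card ((\<lambda>\<sigma> i. v (\<sigma> i)) ` ?Z v)"
    by (rule card_mono[rotated]) (use finP in auto)
  also have "\<dots> \<le> card (?Z v)" by (rule card_image_le) (use finP in auto)
  also have "\<dots> \<le> card (?Z (v \<circ> \<pi>))" if \<pi>: "\<pi> permutes {..<p}" for \<pi>
  proof (rule card_inj_on_le[where f = "\<lambda>\<sigma>. inv \<pi> \<circ> \<sigma>"])
    show "inj_on (\<lambda>\<sigma>. inv \<pi> \<circ> \<sigma>) (?Z v)"
    proof (rule inj_onI)
      fix \<sigma> \<tau> assume "inv \<pi> \<circ> \<sigma> = inv \<pi> \<circ> \<tau>"
      then have "\<pi> (inv \<pi> (\<sigma> x)) = \<pi> (inv \<pi> (\<tau> x))" for x by (metis comp_apply)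
      then show "\<sigma> = \<tau>" by (simp add: permutes_inverses(1)[OF \<pi>] fun_eq_iff)
    qed
    show "(\<lambda>\<sigma>. inv \<pi> \<circ> \<sigma>) ` ?Z v \<subseteq> ?Z (v \<circ> \<pi>)"
    proof (rule image_subsetI)
      fix \<sigma> assume s: "\<sigma> \<in> ?Z v"
      have "inv \<pi> \<circ> \<sigma> permutes {..<p}" using s permutes_compose permutes_inv[OF \<pi>] by auto
      moreover have "ff p a (v \<circ> \<pi>) (inv \<pi> \<circ> \<sigma>) = ff p a v \<sigma>"
        unfolding ff_def by (simp add: permutes_inverses(1)[OF \<pi>])
      ultimately show "inv \<pi> \<circ> \<sigma> \<in> ?Z (v \<circ> \<pi>)" using s by auto
    qed
    show "finite (?Z (v \<circ> \<pi>))" using finP by auto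
  qed
  finally have step: "\<And>\<pi>. \<pi> permutes {..<p} \<Longrightarrow> card (hyperplane p a \<inter> orbit_Sp p v) \<le> card (?Z (v \<circ> \<pi>))" .
  obtain \<pi> where \<pi>: "\<pi> permutes {..<p}" "\<And>i j. i < j \<Longrightarrow> j < p \<Longrightarrow> v (\<pi> i) < v (\<pi> j)"
    using sort_perm[OF assms(5)] by blast
  have "(\<Sum>k<p. (v \<circ> \<pi>) k) = (\<Sum>k<p. v k)" using sum.permute[OF \<pi>(1), of v] by simp
  then have "card (?Z (v \<circ> \<pi>)) \<le> fact (p - 1)"
    using main_sorted[OF assms(1,2,3), of "v \<circ> \<pi>"] \<pi>(2) assms(6) by simp
  then show ?thesis using step[OF \<pi>(1)] by linarith
qed

end
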